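(* Let $\alpha,\beta\in(0,1)$ with $\alpha+\beta>1$. There is a constant $C$ (depending only on $\alpha,\beta$) such that for all sufficiently large $k$: with the medium-expectation rounding defined in the context, if $|\mathcal{M}_1^*(k)|>k^\beta$, $X_i$ ($i\in\mathcal{M}_1^*(k)$) are independent indicators with $\mathbb{E}[X_i]=p_i$ and $Y_i$ ($i\in\mathcal{M}_1^*(k)$) are independent indicators with $\mathbb{E}[Y_i]=q_i$, then $$\left\|\sum_{i\in\mathcal{M}_1^*(k)}X_i-\sum_{i\in\mathcal{M}_1^*(k)}Y_i\right\|\le C\left(k^{-\frac{\alpha+\beta-1}{2}}+k^{-\alpha}+k^{-1/2}\right).$$
   Context: $\|\cdot\|$ is total variation distance. Let $k$ be a positive integer, $\alpha\in(0,1)$, and $p_1,\dots,p_n\in[0,1]$. For $j=0,1,\dots,\lfloor k/2\rfloor$ let $I_j=[j/k,(j+1)/k)$ if $j<\lfloor k/2\rfloor$ and $I_{\lfloor k/2\rfloor}=[\lfloor k/2\rfloor/k,1/2]$; let $I^*_j=\{i:p_i\in I_j\}=\{j_1,\dots,j_{n_j}\}$ (listed in some fixed order, $n_j=|I^*_j|$), $p^j_i:=p_{j_i}$ and $\delta^j_i:=p^j_i-j/k$. Let $\mathcal{M}_1^*(k)=\bigcup_{j=\lfloor k^\alpha\rfloor}^{\lfloor k/2\rfloor}I^*_j$. Medium-expectation rounding: for $j=\lfloor k^\alpha\rfloor,\dots,\lfloor k/2\rfloor$ let $S_j=\sum_{i=1}^{n_j}\delta^j_i$, $m_j=\lfloor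 kS_j\rfloor$, and set $q_{j_i}=(j+1)/k$ for $i=1,\dots,m_j$ and $q_{j_i}=j/k$ for $i=m_j+1,\dots,n_j$. *)

theory Defs
  imports "HOL-Probability.Probability"
begin

definition tv_dist :: "'a pmf \<Rightarrow> 'a pmf \<Rightarrow> real" where
  "tv_dist P Q = (SUP A. \<bar>measure_pmf.prob P A - measure_pmf.prob Q A\<bar>)"

definition indep_ind_sum :: "nat set \<Rightarrow> (nat \<Rightarrow> real) \<Rightarrow> nat pmf" where
  "indep_ind_sum A p =
     map_pmf (\<lambda>x. \<Sum>i\<in>A. of_bool (x i)) (Pi_pmf A False (\<lambda>i. bernoulli_pmf (p i)))"

definition Ij :: "nat \<Rightarrow> nat \<Rightarrow> real set" where
  "Ij k j = (if j < k div 2 then {real j / real k ..< (real j + 1) / real k}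
             else {real j / real k .. 1/2})"

definition blk :: "nat \<Rightarrow> (nat \<Rightarrow> real) \<Rightarrow> nat \<Rightarrow> nat \<Rightarrow> nat set" where
  "blk k p n j = {i \<in> {..<n}. p i \<in> Ij k j}"

definition jrange :: "real \<Rightarrow> nat \<Rightarrow> nat set" where
  "jrange \<alpha> k = {nat \<lfloor>real k powr \<alpha>\<rfloor> .. k div 2}"

definition M1 :: "real \<Rightarrow> nat \<Rightarrow> (nat \<Rightarrow> real) \<Rightarrow> nat \<Rightarrow> nat set" where
  "M1 \<alpha> k p n = (\<Union>j\<in>jrange \<alpha> k. blk k p n j)"

definition Sj :: "nat \<Rightarrow> (nat \<Rightarrow> real) \<Rightarrow> nat \<Rightarrow> nat \<Rightarrow> real" where
  "Sj k p n j = (\<Sum>i\<in>blk k p n j. p i - real j / real k)"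

definition mj :: "nat \<Rightarrow> (nat \<Rightarrow> real) \<Rightarrow> nat \<Rightarrow> nat \<Rightarrow> nat" where
  "mj k p n j = nat \<lfloor>real k * Sj k p n j\<rfloor>"

text \<open>The fixed listing order of each block I*_j is
  given by an injective ranking \<sigma>: the i-th listed element of I*_j is the one
  with exactly i-1 elements of I*_j of smaller rank.\<close>
definition q_round :: "real \<Rightarrow> nat \<Rightarrow> (nat \<Rightarrow> real) \<Rightarrow> nat \<Rightarrow> (nat \<Rightarrow> nat) \<Rightarrow> nat \<Rightarrow> real" where
  "q_round \<alpha> k p n \<sigma> i =
    (if i \<in> M1 \<alpha> k p n then
       (let j = (THE j. j \<in> jrange \<alpha> k \<and> i \<in> blk k p n j) in
         if card {i' \<in> blk k p n j. \<sigma> i' < \<sigma> i} < mj k p n j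
         then (real j + 1) / real k else real j / real k)
     else p i)"

end

theory Submission
  imports Defs
begin


lemma choose_step: "Suc s * (m choose Suc s) = (m - s) * (m choose s)"
  using binomial_absorption[of s m] binomial_absorb_comp[of m s] by simp

lemma central_rec: "(n+1) * ((2*n+2) choose (n+1)) = 2*(2*n+1) * ((2*n) choose n)"
proof -
  have k1: "(n+1) * ((2*n+2) choose (n+1)) = (2*n+2) * ((2*n+1) choose n)"
    using Suc_times_binomial[of n "2*n+1"] by simp
  have e3: "((2*n+1) choose n) = ((2*n+1) choose (n+1))"
    using binomial_symmetric[of n "2*n+1"] by simp
  have k2: "(n+1) * ((2*n+1) choose (n+1)) = (2*n+1) * ((2*n) choose n)"
    using Suc_times_binomial[of n "2*n"] by simp
  have "(n+1) * ((n+1) * ((2*n+2) choose (n+1))) = (n+1) * (2*(2*n+1) * ((2*n) choose n))"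
  proof -
    have gen: "\<And>X Z W::nat. (n+1)*X = (2*n+2)*Z \<Longrightarrow> (n+1)*Z = (2*n+1)*W \<Longrightarrow>
       (n+1)*((n+1)*X) = (n+1)*(2*(2*n+1)*W)"
    proof -
      fix X Z W :: nat assume a: "(n+1)*X = (2*n+2)*Z" "(n+1)*Z = (2*n+1)*W"
      have "(n+1)*((n+1)*X) = (2*n+2)*((n+1)*Z)" using a(1) by (simp add: algebra_simps)
      also have "\<dots> = (2*n+2)*((2*n+1)*W)" using a(2) by simp
      finally show "(n+1)*((n+1)*X) = (n+1)*(2*(2*n+1)*W)" by (simp add: algebra_simps)
    qed
    show ?thesis using gen[OF k1[unfolded e3] k2] .
  qed
  then show ?thesis by (simp only: mult_cancel1) simp
qed

lemma aux1: fixes y a :: real assumes "y > 0" "a^2 \<le> 1/y"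
  shows "(a*(y/(y+1)))^2 \<le> 1/(y+2)"
proof -
  have "(a*(y/(y+1)))^2 = a^2 * (y^2/(y+1)^2)" by (simp add: power_mult_distrib power_divide)
  also have "\<dots> \<le> 1/y * (y^2/(y+1)^2)" using assms(2) by (rule mult_right_mono) simp
  also have "\<dots> = y/(y+1)^2" using assms(1) by (simp add: power2_eq_square)
  also have "\<dots> \<le> 1/(y+2)"
  proof -
    have "y * (y+2) \<le> 1 * (y+1)^2" by (simp add: power2_eq_square algebra_simps)
    thus ?thesis using assms(1) by (simp add: frac_le_eq divide_le_eq le_divide_eq)
  qed
  finally show ?thesis .
qed

lemma central_even: "(real ((2*n) choose n) / 4^n)^2 \<le> 1 / real (2*n+1)"
proof (induction n)
  case 0 then show ?case by simp
next
  case (Suc n)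
  let ?a = "real ((2*n) choose n) / 4^n"
  have r: "real (n+1) * real ((2*n+2) choose (n+1)) = 2*(2*n+1) * real ((2*n) choose n)"
    using central_rec[of n] by (metis of_nat_mult of_nat_numeral of_nat_add of_nat_1 of_nat_mult)
  have g: "\<And>X W::real. real (n+1) * X = 2*(2*n+1)*W \<Longrightarrow> X / 4^(Suc n) = W/4^n * (real (2*n+1)/(real (2*n+1)+1))"
  proof -
    fix X W :: real assume h: "real (n+1) * X = 2*(2*n+1)*W"
    have n1: "real (n+1) > 0" by simp
    have "X = 2*(2*n+1)*W/(n+1)" using h n1 by (simp add: field_simps)
    moreover have "(2*(2*n+1)*W/(n+1)) / 4^(Suc n) = W/4^n * (real (2*n+1)/(real (2*n+1)+1))"
    proof -
      have gg: "\<And>y x::real. y > 0 \<Longrightarrow> x \<ge> 0 \<Longrightarrow> (2*(2*x+1)*W/(x+1)) / (4*y) = W/y * ((2*x+1)/((2*x+1)+1))"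
      proof -
        fix x y :: real assume "y > 0" "x \<ge> 0"
        hence nz: "y \<noteq> 0" "x+1 \<noteq> 0" "2*x+2 \<noteq> 0" by auto
        show "(2*(2*x+1)*W/(x+1)) / (4*y) = W/y * ((2*x+1)/((2*x+1)+1))"
        proof -
          have a1: "(2*(2*x+1)*W/(x+1)) / (4*y) = (2*(2*x+1)*W) / ((x+1)*(4*y))"
            by (simp add: divide_divide_eq_left)
          have a2: "W/y * ((2*x+1)/((2*x+1)+1)) = (W*(2*x+1))/(y*(2*x+2))" by (simp add: add.assoc)
          have "(2*(2*x+1)*W) * (y*(2*x+2)) = (W*(2*x+1)) * ((x+1)*(4*y))"
            by (simp add: algebra_simps)
          thus ?thesis unfolding a1 a2 using nz by (simp add: frac_eq_eq)
        qed
      qed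
      show ?thesis using gg[of "4^n" "real n"] by (simp add: ac_simps)
    qed
    ultimately show "X / 4^(Suc n) = W/4^n * (real (2*n+1)/(real (2*n+1)+1))" by simp
  qed
  have "real ((2*(Suc n)) choose (Suc n)) / 4^(Suc n) = ?a * (real (2*n+1)/(real (2*n+1)+1))"
  proof -
    have eqc: "(2*(Suc n)) choose (Suc n) = (2*n+2) choose (n+1)" by simp
    show ?thesis by (simp only: eqc) (rule g[OF r])
  qed
  hence "(real ((2*(Suc n)) choose (Suc n)) / 4^(Suc n))^2 \<le> 1 / (real (2*n+1) + 2)"
    using aux1[of "real (2*n+1)" ?a] Suc.IH by simp
  also have "real (2*n+1) + 2 = real (2 * Suc n + 1)" by simp
  finally show ?case .
qed

lemma central_bound: "(real (m choose ((m+1) div 2)) / 2^m)^2 \<le> 2 / (m+1)"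
proof (cases "even m")
  case True
  then obtain n where m: "m = 2*n" by auto
  have "(m+1) div 2 = n" using m by simp
  hence "real (m choose ((m+1) div 2)) / 2^m = real ((2*n) choose n) / 4^n"
    by (simp add: m power_mult)
  moreover have "1 / real (2*n+1) \<le> 2 / (real m + 1)" by (simp add: m field_simps)
  ultimately show ?thesis using central_even[of n] by simp
next
  case False
  then obtain n where m: "m = 2*n+1" by (metis oddE)
  have h: "(m+1) div 2 = n+1" using m by simp
  have k2: "real (n+1) * real ((2*n+1) choose (n+1)) = real (2*n+1) * real ((2*n) choose n)"
    using Suc_times_binomial[of n "2*n"] by (metis Suc_eq_plus1 of_nat_mult)
  have "real (m choose ((m+1) div 2)) \<le> 2 * real ((2*n) choose n)"
  proof -
    have "real (n+1) * real ((2*n+1) choose (n+1)) \<le> real (n+1) * (2 * real ((2*n) choose n))"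
      unfolding k2 by (simp add: algebra_simps)
    hence "real ((2*n+1) choose (n+1)) \<le> 2 * real ((2*n) choose n)"
      by (rule mult_left_le_imp_le) simp
    thus ?thesis by (simp add: h m)
  qed
  moreover have pw: "(2::real)^m = 2 * 4^n" by (simp add: m power_mult)
  moreover have gen: "\<And>X c y::real. X \<le> 2*c \<Longrightarrow> y > 0 \<Longrightarrow> X/(2*y) \<le> c/y"
    by (simp add: field_simps)
  ultimately have "real (m choose ((m+1) div 2)) / 2^m \<le> real ((2*n) choose n) / 4^n"
    by (metis gen zero_less_numeral zero_less_power)
  moreover have "0 \<le> real (m choose ((m+1) div 2)) / 2^m" by simp
  ultimately have "(real (m choose ((m+1) div 2)) / 2^m)^2 \<le> (real ((2*n) choose n) / 4^n)^2"
    by (rule power_mono)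
  also have "\<dots> \<le> 1 / real (2*n+1)" by (rule central_even)
  also have "\<dots> \<le> 2 / (real m+1)" by (simp add: m field_simps)
  finally show ?thesis .
qed


definition cb :: "nat \<Rightarrow> real" where "cb m = real (m choose ((m+1) div 2)) / 2^m"

lemma pmf_bin_half: "pmf (binomial_pmf m (1/2)) s = real (m choose s) / 2^m"
proof (cases "s \<le> m")
  case True
  have "(1/2::real)^s * (1/2)^(m-s) = (1/2)^(s + (m-s))" by (simp add: power_add)
  also have "s + (m-s) = m" using True by simp
  finally show ?thesis by (simp add: power_divide)
next
  case False then show ?thesis by (simp add: binomial_eq_0)
qed

lemma choose_up: assumes "0 < t" "2*t \<le> m+1" shows "m choose (t-1) \<le> m choose t"
proof -
  obtain s where t: "t = Suc s" using assms by (cases t) auto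
  have "Suc s * (m choose Suc s) = (m - s) * (m choose s)" by (rule choose_step)
  moreover have "m - s \<ge> Suc s" using assms t by simp
  ultimately have "Suc s * (m choose Suc s) \<ge> Suc s * (m choose s)"
    by (metis mult_le_mono1)
  hence "m choose s \<le> m choose Suc s" by (simp only: Suc_mult_le_cancel1)
  thus ?thesis using t by simp
qed

lemma choose_down: assumes "0 < t" "2*t \<ge> m+2" shows "m choose t \<le> m choose (t-1)"
proof -
  obtain s where t: "t = Suc s" using assms by (cases t) auto
  have "Suc s * (m choose Suc s) = (m - s) * (m choose s)" by (rule choose_step)
  moreover have "m - s \<le> Suc s" using assms t by simp
  ultimately have "Suc s * (m choose Suc s) \<le> Suc s * (m choose s)"
    by (metis mult_le_mono1)
  hence "m choose Suc s \<le> m choose s" by (simp only: Suc_mult_le_cancel1)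
  thus ?thesis using t by simp
qed

lemma smooth1:
  fixes A :: "nat set"
  shows "\<bar>measure (binomial_pmf m (1/2)) A - measure (binomial_pmf m (1/2)) {s. Suc s \<in> A}\<bar> \<le> cb m"
proof -
  define B where "B = binomial_pmf m (1/2)"
  define f where "f t = real (m choose t) / 2^m" for t
  define g where "g t = (if t = 0 then 0 else f (t-1))" for t
  define D where "D t = f t - g t" for t
  define h where "h = (m+1) div 2"
  define T where "T = A \<inter> {..m+1}"
  have setB: "set_pmf B = {..m}" unfolding B_def by simp
  have pB: "pmf B s = f s" for s unfolding B_def f_def by (rule pmf_bin_half)
  have fz: "f t = 0" if "t > m" for t using that unfolding f_def by simp
  have finT: "finite T" unfolding T_def by simp
  have m1: "measure B A = sum f T"
  proof -
    have "measure B A = measure B (A \<inter> set_pmf B)" by (simp add: measure_Int_set_pmf)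
    also have "\<dots> = sum f (A \<inter> {..m})" by (simp add: setB measure_measure_pmf_finite pB)
    also have "\<dots> = sum f T"
      unfolding T_def by (rule sum.mono_neutral_left) (use fz in \<open>auto simp: not_le\<close>)
    finally show ?thesis .
  qed
  have m2: "measure B {s. Suc s \<in> A} = sum g T"
  proof -
    have "measure B {s. Suc s \<in> A} = measure B ({s. Suc s \<in> A} \<inter> set_pmf B)" by (simp add: measure_Int_set_pmf)
    also have "\<dots> = sum f ({s. Suc s \<in> A} \<inter> {..m})" by (simp add: setB measure_measure_pmf_finite pB)
    also have "\<dots> = sum (\<lambda>s. g (Suc s)) ({s. Suc s \<in> A} \<inter> {..m})" by (simp add: g_def)
    also have "\<dots> = sum g (Suc ` ({s. Suc s \<in> A} \<inter> {..m}))"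
      by (rule sum.reindex[symmetric, unfolded comp_def]) simp
    also have "\<dots> = sum g T"
    proof (rule sum.mono_neutral_left)
      show "finite T" by (rule finT)
      show "Suc ` ({s. Suc s \<in> A} \<inter> {..m}) \<subseteq> T" unfolding T_def by auto
      show "\<forall>i\<in>T - Suc ` ({s. Suc s \<in> A} \<inter> {..m}). g i = 0"
      proof
        fix i assume i: "i \<in> T - Suc ` ({s. Suc s \<in> A} \<inter> {..m})"
        show "g i = 0"
        proof (cases i)
          case 0 then show ?thesis by (simp add: g_def)
        next
          case (Suc j)
          then have "j \<notin> {..m}" using i unfolding T_def by auto
          then show ?thesis using Suc by (simp add: g_def fz)
        qed
      qed
    qed
    finally show ?thesis .
  qed
  have diff: "measure B A - measure B {s. Suc s \<in> A} = sum D T"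
    unfolding m1 m2 D_def by (simp add: sum_subtractf)
  have Dpos: "D t \<ge> 0" if "t \<le> h" for t
  proof (cases "t = 0")
    case True then show ?thesis by (simp add: D_def g_def f_def)
  next
    case False
    then have "m choose (t-1) \<le> m choose t" using that choose_up[of t m] unfolding h_def by simp
    then show ?thesis using False by (simp add: D_def g_def f_def divide_right_mono)
  qed
  have Dneg: "D t \<le> 0" if "t > h" for t
  proof -
    have "m choose t \<le> m choose (t-1)" using that choose_down[of t m] unfolding h_def by simp
    then show ?thesis using that by (simp add: D_def g_def f_def divide_right_mono)
  qed
  have tel: "sum D {..k} = f k" for k
    by (induction k) (simp_all add: D_def g_def)
  have tot: "sum D {..m+1} = 0" using tel[of "m+1"] fz[of "m+1"] by simp
  have hle: "h \<le> m+1" unfolding h_def by simp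
  have split: "sum D {..m+1} = sum D {..h} + sum D {h<..m+1}"
  proof -
    have "{..m+1} = {..h} \<union> {h<..m+1}" using hle by auto
    moreover have "{..h} \<inter> {h<..m+1} = {}" by auto
    ultimately show ?thesis by (simp add: sum.union_disjoint)
  qed
  have up: "sum D T \<le> f h"
  proof -
    have "sum D T = sum D (T \<inter> {..h}) + sum D (T - {..h})"
      using finT by (metis sum.Int_Diff)
    also have "sum D (T - {..h}) \<le> 0" by (rule sum_nonpos) (auto intro: Dneg)
    also have "sum D (T \<inter> {..h}) \<le> sum D {..h}"
      by (rule sum_mono2) (auto intro: Dpos)
    finally show ?thesis using tel[of h] by simp
  qed
  have lo: "- sum D T \<le> f h"
  proof -
    have "sum D T = sum D (T \<inter> {h<..m+1}) + sum D (T - {h<..m+1})"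
      using finT by (metis sum.Int_Diff)
    moreover have "sum D (T - {h<..m+1}) \<ge> 0"
      by (rule sum_nonneg) (auto simp: T_def intro: Dpos)
    moreover have "- sum D (T \<inter> {h<..m+1}) \<le> - sum D {h<..m+1}"
    proof -
      have "sum (\<lambda>t. - D t) (T \<inter> {h<..m+1}) \<le> sum (\<lambda>t. - D t) {h<..m+1}"
        by (rule sum_mono2) (auto intro: Dneg)
      thus ?thesis by (simp add: sum_negf)
    qed
    moreover have "- sum D {h<..m+1} = f h" using split tot tel[of h] by simp
    ultimately show ?thesis by linarith
  qed
  have "f h = cb m" unfolding f_def cb_def h_def by simp
  thus ?thesis using up lo diff unfolding B_def by (simp add: abs_le_iff)
qed

lemma smooth_shift:
  fixes A :: "nat set"
  shows "\<bar>measure (map_pmf (\<lambda>s. s + u) (binomial_pmf m (1/2))) A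
          - measure (map_pmf (\<lambda>s. s + v) (binomial_pmf m (1/2))) A\<bar> \<le> \<bar>real u - real v\<bar> * cb m"
proof -
  define P where "P w = measure (map_pmf (\<lambda>s. s + w) (binomial_pmf m (1/2))) A" for w
  have step: "\<bar>P w - P (Suc w)\<bar> \<le> cb m" for w
  proof -
    have "P w = measure (binomial_pmf m (1/2)) {s. s + w \<in> A}" unfolding P_def by (simp add: vimage_def)
    moreover have "P (Suc w) = measure (binomial_pmf m (1/2)) {s. Suc s \<in> {s. s + w \<in> A}}"
      unfolding P_def by (simp add: vimage_def)
    ultimately show ?thesis using smooth1[of m "{s. s + w \<in> A}"] by simp
  qed
  have ind: "\<bar>P w - P (w + d)\<bar> \<le> real d * cb m" for w d
  proof (induction d)
    case 0 then show ?case by simp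
  next
    case (Suc d)
    have "\<bar>P w - P (w + Suc d)\<bar> \<le> \<bar>P w - P (w + d)\<bar> + \<bar>P (w+d) - P (Suc (w+d))\<bar>" by simp
    also have "\<dots> \<le> real d * cb m + cb m" using Suc.IH step[of "w+d"] by linarith
    finally show ?case by (simp add: algebra_simps)
  qed
  show ?thesis
  proof (cases "u \<le> v")
    case True
    then obtain d where "v = u + d" using le_Suc_ex by blast
    then show ?thesis using ind[of u d] unfolding P_def by simp
  next
    case False
    then obtain d where "u = v + d" by (metis le_Suc_ex nat_le_linear)
    then show ?thesis using ind[of v d] unfolding P_def by (simp add: abs_minus_commute)
  qed
qed

lemma cb_nonneg: "cb m \<ge> 0" unfolding cb_def by simp

lemma cb_sq: "(cb m)^2 \<le> 2 / (real m + 1)" unfolding cb_def by (rule central_bound)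


lemma bool_pmf_eqI:
  fixes P Q :: "bool pmf"
  assumes "pmf P True = pmf Q True" shows "P = Q"
proof (rule pmf_eqI)
  fix x :: bool
  have s: "pmf M True + pmf M False = 1" for M :: "bool pmf"
  proof -
    have "measure M UNIV = 1" by simp
    moreover have "measure M UNIV = sum (pmf M) UNIV" by (rule measure_measure_pmf_finite) simp
    ultimately show ?thesis by (simp add: UNIV_bool)
  qed
  show "pmf P x = pmf Q x"
    using assms s[of P] s[of Q] by (cases x) auto
qed

lemma bern_mix:
  assumes "0 \<le> r" "r \<le> 1" "0 \<le> a" "a \<le> 1"
  shows "bind_pmf (bernoulli_pmf r) (\<lambda>z. if z then bernoulli_pmf (1/2) else bernoulli_pmf a)
         = bernoulli_pmf (r/2 + (1-r)*a)"
proof (rule bool_pmf_eqI)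
  have "0 \<le> r/2 + (1-r)*a" using assms by simp
  moreover have "r/2 + (1-r)*a \<le> 1"
  proof -
    have "(1-r)*a \<le> (1-r)*1" using assms by (intro mult_left_mono) auto
    thus ?thesis using assms by simp
  qed
  ultimately show "pmf (bind_pmf (bernoulli_pmf r) (\<lambda>z. if z then bernoulli_pmf (1/2) else bernoulli_pmf a)) True
        = pmf (bernoulli_pmf (r/2 + (1-r)*a)) True"
    using assms by (simp add: pmf_bind)
qed

lemma IS_insert:
  assumes "finite A" "i \<notin> A"
  shows "indep_ind_sum (insert i A) p =
         bind_pmf (bernoulli_pmf (p i)) (\<lambda>b. map_pmf (\<lambda>s. s + of_bool b) (indep_ind_sum A p))"
proof -
  have sm: "(\<Sum>j\<in>insert i A. of_bool ((f(i := y)) j) :: nat) = (\<Sum>j\<in>A. of_bool (f j)) + of_bool y" for f y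
  proof -
    have "(\<Sum>j\<in>insert i A. of_bool ((f(i := y)) j) :: nat) = of_bool y + (\<Sum>j\<in>A. of_bool ((f(i := y)) j))"
      using assms by (simp add: sum.insert)
    also have "(\<Sum>j\<in>A. of_bool ((f(i := y)) j) :: nat) = (\<Sum>j\<in>A. of_bool (f j))"
      using assms by (intro sum.cong) auto
    finally show ?thesis by simp
  qed
  define Pi where "Pi = Pi_pmf A False (\<lambda>i. bernoulli_pmf (p i))"
  define S where "S = (\<lambda>x. (\<Sum>j\<in>insert i A. of_bool (x j)) :: nat)"
  have "indep_ind_sum (insert i A) p = map_pmf S (bind_pmf (bernoulli_pmf (p i)) (\<lambda>y. bind_pmf Pi (\<lambda>f. return_pmf (f(i := y)))))"
    unfolding indep_ind_sum_def S_def Pi_def using Pi_pmf_insert'[OF assms, of False "\<lambda>i. bernoulli_pmf (p i)"] by simp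
  also have "\<dots> = bind_pmf (bernoulli_pmf (p i)) (\<lambda>y. map_pmf (\<lambda>f. S (f(i := y))) Pi)"
    by (simp add: map_bind_pmf map_pmf_def bind_assoc_pmf bind_return_pmf)
  also have "\<dots> = bind_pmf (bernoulli_pmf (p i)) (\<lambda>b. map_pmf (\<lambda>s. s + of_bool b) (indep_ind_sum A p))"
    unfolding indep_ind_sum_def Pi_def[symmetric] S_def sm
    by (simp add: map_pmf_comp o_def)
  finally show ?thesis .
qed

lemma integral_bind_fin:
  fixes h :: "'b \<Rightarrow> real"
  assumes "finite (set_pmf p)" "\<And>x. x \<in> set_pmf p \<Longrightarrow> finite (set_pmf (f x))"
  shows "measure_pmf.expectation (bind_pmf p f) h = measure_pmf.expectation p (\<lambda>x. measure_pmf.expectation (f x) h)"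
proof -
  have "measure_pmf.expectation (bind_pmf p f) h = (\<Sum>a\<in>set_pmf p. pmf p a *\<^sub>R measure_pmf.expectation (f a) h)"
    using assms by (intro pmf_expectation_bind) auto
  also have "\<dots> = measure_pmf.expectation p (\<lambda>x. measure_pmf.expectation (f x) h)"
    using assms by (subst integral_measure_pmf[of "set_pmf p"]) auto
  finally show ?thesis .
qed

definition e0 :: "real \<Rightarrow> real \<Rightarrow> real" where "e0 a b = (b - a) / (1 - a)"

lemma e0_props:
  assumes "0 \<le> a" "a \<le> b" "b \<le> 1"
  shows "0 \<le> e0 a b" "e0 a b \<le> 1" "(1 - a) * e0 a b = b - a"
proof -
  show "0 \<le> e0 a b" using assms unfolding e0_def by simp
  show "e0 a b \<le> 1" using assms unfolding e0_def by (cases "a = 1") (simp_all add: divide_le_eq)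
  show "(1 - a) * e0 a b = b - a" using assms unfolding e0_def by (cases "a = 1") simp_all
qed

definition cpl :: "real \<Rightarrow> real \<Rightarrow> (bool \<times> bool) pmf" where
  "cpl a b = (if a \<le> b then
     bind_pmf (bernoulli_pmf a) (\<lambda>x. if x then return_pmf (True, True) else map_pmf (\<lambda>e. (False, e)) (bernoulli_pmf (e0 a b)))
   else
     bind_pmf (bernoulli_pmf b) (\<lambda>x. if x then return_pmf (True, True) else map_pmf (\<lambda>e. (e, False)) (bernoulli_pmf (e0 b a))))"

lemma cpl_fst:
  assumes "0 \<le> a" "a \<le> 1" "0 \<le> b" "b \<le> 1"
  shows "map_pmf fst (cpl a b) = bernoulli_pmf a"
proof (cases "a \<le> b")
  case True
  have "map_pmf fst (cpl a b) = bind_pmf (bernoulli_pmf a) (\<lambda>x. return_pmf x)"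
    using True unfolding cpl_def by (auto simp: map_bind_pmf map_pmf_comp o_def intro!: bind_pmf_cong)
  then show ?thesis by (simp add: bind_return_pmf')
next
  case False
  note ep = e0_props[of b a]
  show ?thesis
  proof (rule bool_pmf_eqI)
    show "pmf (map_pmf fst (cpl a b)) True = pmf (bernoulli_pmf a) True"
      using False assms ep unfolding cpl_def
      by (simp add: map_bind_pmf map_pmf_comp o_def pmf_bind algebra_simps)
  qed
qed

lemma cpl_snd:
  assumes "0 \<le> a" "a \<le> 1" "0 \<le> b" "b \<le> 1"
  shows "map_pmf snd (cpl a b) = bernoulli_pmf b"
proof (cases "a \<le> b")
  case False
  have "map_pmf snd (cpl a b) = bind_pmf (bernoulli_pmf b) (\<lambda>x. return_pmf x)"
    using False unfolding cpl_def by (auto simp: map_bind_pmf map_pmf_comp o_def intro!: bind_pmf_cong)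
  then show ?thesis by (simp add: bind_return_pmf')
next
  case True
  note ep = e0_props[of a b]
  show ?thesis
  proof (rule bool_pmf_eqI)
    show "pmf (map_pmf snd (cpl a b)) True = pmf (bernoulli_pmf b) True"
      using True assms ep unfolding cpl_def
      by (simp add: map_bind_pmf map_pmf_comp o_def pmf_bind algebra_simps)
  qed
qed

lemma cpl_E1:
  assumes "0 \<le> a" "a \<le> 1" "0 \<le> b" "b \<le> 1"
  shows "measure_pmf.expectation (cpl a b) (\<lambda>(x,y). w + of_bool x - of_bool y) = w + a - b"
proof (cases "a \<le> b")
  case True
  have ep: "0 \<le> e0 a b" "e0 a b \<le> 1" "(1 - a) * e0 a b = b - a" using e0_props[of a b] True assms by auto
  have c: "cpl a b = bind_pmf (bernoulli_pmf a) (\<lambda>x. if x then return_pmf (True, True) else map_pmf (\<lambda>e. (False, e)) (bernoulli_pmf (e0 a b)))"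
    using True by (simp add: cpl_def)
  have ex: "e0 a b - a * e0 a b = b - a" using ep(3) by (simp add: algebra_simps)
  show ?thesis unfolding c using assms ep ex
    by (subst integral_bind_fin) (auto simp: algebra_simps)
next
  case False
  have ep: "0 \<le> e0 b a" "e0 b a \<le> 1" "(1 - b) * e0 b a = a - b" using e0_props[of b a] False assms by auto
  have c: "cpl a b = bind_pmf (bernoulli_pmf b) (\<lambda>x. if x then return_pmf (True, True) else map_pmf (\<lambda>e. (e, False)) (bernoulli_pmf (e0 b a)))"
    using False by (simp add: cpl_def)
  have ex: "e0 b a - b * e0 b a = a - b" using ep(3) by (simp add: algebra_simps)
  show ?thesis unfolding c using assms ep ex False
    by (subst integral_bind_fin) (auto simp: algebra_simps)
qed

lemma cpl_E2:
  assumes "0 \<le> a" "a \<le> 1" "0 \<le> b" "b \<le> 1"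
  shows "measure_pmf.expectation (cpl a b) (\<lambda>(x,y). (w + of_bool x - of_bool y)^2) = w^2 + 2*w*(a-b) + \<bar>a - b\<bar>"
proof (cases "a \<le> b")
  case True
  have ep: "0 \<le> e0 a b" "e0 a b \<le> 1" "(1 - a) * e0 a b = b - a" using e0_props[of a b] True assms by auto
  have c: "cpl a b = bind_pmf (bernoulli_pmf a) (\<lambda>x. if x then return_pmf (True, True) else map_pmf (\<lambda>e. (False, e)) (bernoulli_pmf (e0 a b)))"
    using True by (simp add: cpl_def)
  have ex: "e0 a b - a * e0 a b = b - a" using ep(3) by (simp add: algebra_simps)
  have ex2: "w * e0 a b - w * a * e0 a b = w * (b - a)" using ex by (metis right_diff_distrib mult.assoc)
  have ab: "\<bar>a - b\<bar> = b - a" using True by simp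
  show ?thesis unfolding c ab using assms ep ex ex2
    by (subst integral_bind_fin) (auto simp: algebra_simps power2_eq_square)
next
  case False
  have ep: "0 \<le> e0 b a" "e0 b a \<le> 1" "(1 - b) * e0 b a = a - b" using e0_props[of b a] False assms by auto
  have c: "cpl a b = bind_pmf (bernoulli_pmf b) (\<lambda>x. if x then return_pmf (True, True) else map_pmf (\<lambda>e. (e, False)) (bernoulli_pmf (e0 b a)))"
    using False by (simp add: cpl_def)
  have ex: "e0 b a - b * e0 b a = a - b" using ep(3) by (simp add: algebra_simps)
  have ex2: "w * e0 b a - w * b * e0 b a = w * (a - b)" using ex by (metis right_diff_distrib mult.assoc)
  have ab: "\<bar>a - b\<bar> = a - b" using False by simp
  show ?thesis unfolding c ab using assms ep ex ex2 False
    by (subst integral_bind_fin) (auto simp: algebra_simps power2_eq_square)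
qed


definition stp :: "real \<Rightarrow> real \<Rightarrow> real \<Rightarrow> nat \<times> nat \<times> nat \<Rightarrow> (nat \<times> nat \<times> nat) pmf" where
  "stp r a b t = (case t of (m,u,v) \<Rightarrow> bind_pmf (bernoulli_pmf r)
      (\<lambda>z. if z then return_pmf (Suc m, u, v)
           else map_pmf (\<lambda>(x,y). (m, u + of_bool x, v + of_bool y)) (cpl a b)))"

definition FX :: "nat \<times> nat \<times> nat \<Rightarrow> nat pmf" where
  "FX t = (case t of (m,u,v) \<Rightarrow> map_pmf (\<lambda>s. s + u) (binomial_pmf m (1/2)))"
definition FY :: "nat \<times> nat \<times> nat \<Rightarrow> nat pmf" where
  "FY t = (case t of (m,u,v) \<Rightarrow> map_pmf (\<lambda>s. s + v) (binomial_pmf m (1/2)))"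

lemma bin_Suc_shift:
  "map_pmf (\<lambda>s. s + u) (binomial_pmf (Suc m) (1/2)) =
   bind_pmf (bernoulli_pmf (1/2)) (\<lambda>x. map_pmf (\<lambda>s. s + (u + of_bool x)) (binomial_pmf m (1/2)))"
  by (simp add: binomial_pmf_Suc map_bind_pmf map_pmf_def bind_assoc_pmf bind_return_pmf algebra_simps
           cong: if_cong) (auto intro!: bind_pmf_cong)

lemma repX:
  assumes "0 \<le> r" "r \<le> 1" "0 \<le> a" "a \<le> 1" "0 \<le> b" "b \<le> 1"
  shows "bind_pmf (stp r a b (m,u,v)) FX =
         bind_pmf (bernoulli_pmf (r/2 + (1-r)*a)) (\<lambda>x. map_pmf (\<lambda>s. s + (u + of_bool x)) (binomial_pmf m (1/2)))"
proof -
  define G where "G x = map_pmf (\<lambda>s. s + (u + of_bool x)) (binomial_pmf m (1/2))" for x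
  have "bind_pmf (stp r a b (m,u,v)) FX =
        bind_pmf (bernoulli_pmf r) (\<lambda>z. if z then bind_pmf (bernoulli_pmf (1/2)) G else bind_pmf (map_pmf fst (cpl a b)) G)"
    unfolding stp_def FX_def G_def
    by (auto simp: bind_assoc_pmf bind_return_pmf bind_map_pmf bin_Suc_shift split_beta intro!: bind_pmf_cong)
  also have "\<dots> = bind_pmf (bernoulli_pmf r) (\<lambda>z. bind_pmf (if z then bernoulli_pmf (1/2) else bernoulli_pmf a) G)"
    using assms by (auto simp: cpl_fst intro!: bind_pmf_cong)
  also have "\<dots> = bind_pmf (bind_pmf (bernoulli_pmf r) (\<lambda>z. if z then bernoulli_pmf (1/2) else bernoulli_pmf a)) G"
    by (simp add: bind_assoc_pmf)
  also have "\<dots> = bind_pmf (bernoulli_pmf (r/2 + (1-r)*a)) G" using assms by (simp add: bern_mix)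
  finally show ?thesis unfolding G_def .
qed

lemma repY:
  assumes "0 \<le> r" "r \<le> 1" "0 \<le> a" "a \<le> 1" "0 \<le> b" "b \<le> 1"
  shows "bind_pmf (stp r a b (m,u,v)) FY =
         bind_pmf (bernoulli_pmf (r/2 + (1-r)*b)) (\<lambda>x. map_pmf (\<lambda>s. s + (v + of_bool x)) (binomial_pmf m (1/2)))"
proof -
  define G where "G x = map_pmf (\<lambda>s. s + (v + of_bool x)) (binomial_pmf m (1/2))" for x
  have "bind_pmf (stp r a b (m,u,v)) FY =
        bind_pmf (bernoulli_pmf r) (\<lambda>z. if z then bind_pmf (bernoulli_pmf (1/2)) G else bind_pmf (map_pmf snd (cpl a b)) G)"
    unfolding stp_def FY_def G_def
    by (auto simp: bind_assoc_pmf bind_return_pmf bind_map_pmf bin_Suc_shift split_beta intro!: bind_pmf_cong)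
  also have "\<dots> = bind_pmf (bernoulli_pmf r) (\<lambda>z. bind_pmf (if z then bernoulli_pmf (1/2) else bernoulli_pmf b) G)"
    using assms by (auto simp: cpl_snd intro!: bind_pmf_cong)
  also have "\<dots> = bind_pmf (bind_pmf (bernoulli_pmf r) (\<lambda>z. if z then bernoulli_pmf (1/2) else bernoulli_pmf b)) G"
    by (simp add: bind_assoc_pmf)
  also have "\<dots> = bind_pmf (bernoulli_pmf (r/2 + (1-r)*b)) G" using assms by (simp add: bern_mix)
  finally show ?thesis unfolding G_def .
qed

lemma stp_fst:
  "map_pmf fst (stp r a b (m,u,v)) = map_pmf (\<lambda>z. if z then Suc m else m) (bernoulli_pmf r)"
proof -
  have "map_pmf fst (stp r a b (m,u,v)) = bind_pmf (bernoulli_pmf r) (\<lambda>z. return_pmf (if z then Suc m else m))"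
    unfolding stp_def by (auto simp: map_bind_pmf map_pmf_comp split_beta intro!: bind_pmf_cong)
  then show ?thesis by (simp add: map_pmf_def)
qed

lemma stp_fin: "finite (set_pmf (stp r a b t))"
proof -
  have "finite (set_pmf (cpl a b))" by (rule finite_subset[OF subset_UNIV]) simp
  moreover have "finite (set_pmf (bernoulli_pmf r))" by (rule finite_subset[OF subset_UNIV]) simp
  ultimately show ?thesis unfolding stp_def by (auto split: prod.split)
qed

lemma bern_fin: "finite (set_pmf (bernoulli_pmf r))" by (rule finite_subset[OF subset_UNIV]) simp
lemma cpl_fin: "finite (set_pmf (cpl a b))" by (rule finite_subset[OF subset_UNIV]) simp

lemma stp_E_gen:
  assumes "0 \<le> r" "r \<le> 1"
  shows "measure_pmf.expectation (stp r a b (m,u,v)) h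
         = r * h (Suc m, u, v) + (1-r) * measure_pmf.expectation (cpl a b) (\<lambda>(x,y). h (m, u + of_bool x, v + of_bool y))"
proof -
  have "measure_pmf.expectation (stp r a b (m,u,v)) h =
     measure_pmf.expectation (bernoulli_pmf r) (\<lambda>z. measure_pmf.expectation (if z then return_pmf (Suc m, u, v)
           else map_pmf (\<lambda>(x,y). (m, u + of_bool x, v + of_bool y)) (cpl a b)) h)"
    unfolding stp_def by (simp add: integral_bind_fin bern_fin cpl_fin)
  also have "\<dots> = r * h (Suc m, u, v) + (1-r) * measure_pmf.expectation (cpl a b) (\<lambda>(x,y). h (m, u + of_bool x, v + of_bool y))"
    using assms by (simp add: case_prod_unfold)
  finally show ?thesis .
qed

lemma stp_E1:
  assumes "0 \<le> r" "r \<le> 1" "0 \<le> a" "a \<le> 1" "0 \<le> b" "b \<le> 1"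
  shows "measure_pmf.expectation (stp r a b (m,u,v)) (\<lambda>(m,u,v). real u - real v)
         = (real u - real v) + (1-r)*(a-b)"
proof -
  have c: "measure_pmf.expectation (cpl a b) (\<lambda>(x,y). (\<lambda>(m,u,v). real u - real v) (m, u + of_bool x, v + of_bool y))
     = measure_pmf.expectation (cpl a b) (\<lambda>(x,y). (real u - real v) + of_bool x - of_bool y)"
    by (simp add: case_prod_unfold algebra_simps)
  show ?thesis unfolding stp_E_gen[OF assms(1,2)] c cpl_E1[OF assms(3-6)]
    by (simp add: algebra_simps)
qed

lemma stp_E2:
  assumes "0 \<le> r" "r \<le> 1" "0 \<le> a" "a \<le> 1" "0 \<le> b" "b \<le> 1"
  shows "measure_pmf.expectation (stp r a b (m,u,v)) (\<lambda>(m,u,v). (real u - real v)^2)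
         = (real u - real v)^2 + 2*(real u - real v)*((1-r)*(a-b)) + (1-r)*\<bar>a-b\<bar>"
proof -
  have c: "measure_pmf.expectation (cpl a b) (\<lambda>(x,y). (\<lambda>(m,u,v). (real u - real v)^2) (m, u + of_bool x, v + of_bool y))
     = measure_pmf.expectation (cpl a b) (\<lambda>(x,y). ((real u - real v) + of_bool x - of_bool y)^2)"
    by (simp add: case_prod_unfold algebra_simps)
  show ?thesis unfolding stp_E_gen[OF assms(1,2)] c cpl_E2[OF assms(3-6)]
    by (simp add: algebra_simps)
qed


definition W1 :: "nat \<times> nat \<times> nat \<Rightarrow> real" where "W1 t = (case t of (m,u,v) \<Rightarrow> real u - real v)"
definition W2 :: "nat \<times> nat \<times> nat \<Rightarrow> real" where "W2 t = (case t of (m,u,v) \<Rightarrow> (real u - real v)^2)"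

lemma E_lin:
  fixes f g :: "'a \<Rightarrow> real"
  assumes "finite (set_pmf R)"
  shows "measure_pmf.expectation R (\<lambda>t. f t + c * g t + d) = measure_pmf.expectation R f + c * measure_pmf.expectation R g + d"
proof -
  have i: "integrable (measure_pmf R) h" for h :: "'a \<Rightarrow> real" using assms by (rule integrable_measure_pmf_finite)
  have "measure_pmf.expectation R (\<lambda>t. f t + c * g t + d) = measure_pmf.expectation R (\<lambda>t. f t + c * g t) + measure_pmf.expectation R (\<lambda>t. d)"
    by (rule Bochner_Integration.integral_add) (simp_all add: i)
  also have "measure_pmf.expectation R (\<lambda>t. f t + c * g t) = measure_pmf.expectation R f + measure_pmf.expectation R (\<lambda>t. c * g t)"
    by (rule Bochner_Integration.integral_add) (simp_all add: i)
  also have "measure_pmf.expectation R (\<lambda>t. c * g t) = c * measure_pmf.expectation R g" by simp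
  also have "measure_pmf.expectation R (\<lambda>t. d) = d" by simp
  finally show ?thesis .
qed

definition pa :: "real \<Rightarrow> real \<Rightarrow> real" where "pa r x = (x - r/2) / (1 - r)"

lemma pa_props:
  assumes "0 < r" "r < 1" "r/2 \<le> x" "x \<le> 1 - r/2"
  shows "0 \<le> pa r x" "pa r x \<le> 1" "r/2 + (1-r) * pa r x = x"
  using assms unfolding pa_def by (auto simp: divide_le_eq)

lemma pa_diff:
  assumes "r < 1"
  shows "(1-r) * (pa r x - pa r y) = x - y" "(1-r) * \<bar>pa r x - pa r y\<bar> = \<bar>x - y\<bar>"
proof -
  have "pa r x - pa r y = (x - y) / (1 - r)" unfolding pa_def by (simp add: diff_divide_distrib)
  moreover have "1 - r > 0" using assms by simp
  ultimately show "(1-r) * (pa r x - pa r y) = x - y" "(1-r) * \<bar>pa r x - pa r y\<bar> = \<bar>x - y\<bar>"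
    by (simp_all add: abs_divide)
qed

lemma coupling:
  assumes fin: "finite N" and r: "0 < r" "r < 1"
    and pN: "\<forall>i\<in>N. r/2 \<le> p i \<and> p i \<le> 1 - r/2" and qN: "\<forall>i\<in>N. r/2 \<le> q i \<and> q i \<le> 1 - r/2"
  shows "\<exists>R. indep_ind_sum N p = bind_pmf R FX \<and> indep_ind_sum N q = bind_pmf R FY \<and>
           map_pmf fst R = binomial_pmf (card N) r \<and> finite (set_pmf R) \<and>
           measure_pmf.expectation R W1 = (\<Sum>i\<in>N. p i - q i) \<and>
           measure_pmf.expectation R W2 \<le> (\<Sum>i\<in>N. p i - q i)^2 + (\<Sum>i\<in>N. \<bar>p i - q i\<bar>)"
  using fin pN qN
proof (induction N rule: finite_induct)
  case empty
  let ?R = "return_pmf (0::nat, 0::nat, 0::nat)"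
  have IS0: "indep_ind_sum {} f = return_pmf 0" for f unfolding indep_ind_sum_def by simp
  have "indep_ind_sum {} p = bind_pmf ?R FX" "indep_ind_sum {} q = bind_pmf ?R FY"
    by (simp_all add: IS0 bind_return_pmf FX_def FY_def binomial_pmf_0)
  moreover have "map_pmf fst ?R = binomial_pmf (card {}) r" using r by (simp add: binomial_pmf_0)
  moreover have "measure_pmf.expectation ?R W1 = 0" "measure_pmf.expectation ?R W2 = 0"
    by (simp_all add: W1_def W2_def)
  ultimately show ?case by (intro exI[of _ ?R]) simp
next
  case (insert i F)
  from insert.IH insert.prems obtain R where
    R1: "indep_ind_sum F p = bind_pmf R FX" and R2: "indep_ind_sum F q = bind_pmf R FY" and
    R3: "map_pmf fst R = binomial_pmf (card F) r" and R4: "finite (set_pmf R)" and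
    R5: "measure_pmf.expectation R W1 = (\<Sum>i\<in>F. p i - q i)" and
    R6: "measure_pmf.expectation R W2 \<le> (\<Sum>i\<in>F. p i - q i)^2 + (\<Sum>i\<in>F. \<bar>p i - q i\<bar>)"
    by auto
  define a where "a = pa r (p i)"
  define b where "b = pa r (q i)"
  have pi: "r/2 \<le> p i" "p i \<le> 1 - r/2" and qi: "r/2 \<le> q i" "q i \<le> 1 - r/2" using insert.prems by auto
  note ap = pa_props[OF r pi, folded a_def]
  note bp = pa_props[OF r qi, folded b_def]
  have r01: "0 \<le> r" "r \<le> 1" using r by auto
  note dd = pa_diff[OF r(2), of "p i" "q i", folded a_def b_def]
  define R' where "R' = bind_pmf R (stp r a b)"
  have C1: "indep_ind_sum (insert i F) p = bind_pmf R' FX"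
  proof -
    have "bind_pmf R' FX = bind_pmf R (\<lambda>t. bind_pmf (stp r a b t) FX)"
      unfolding R'_def by (simp add: bind_assoc_pmf)
    also have "\<dots> = bind_pmf R (\<lambda>t. bind_pmf (bernoulli_pmf (p i)) (\<lambda>x. map_pmf (\<lambda>s. s + of_bool x) (FX t)))"
    proof (rule bind_pmf_cong[OF refl])
      fix t :: "nat \<times> nat \<times> nat"
      obtain m u v where t: "t = (m,u,v)" by (cases t) auto
      show "bind_pmf (stp r a b t) FX = bind_pmf (bernoulli_pmf (p i)) (\<lambda>x. map_pmf (\<lambda>s. s + of_bool x) (FX t))"
        unfolding t repX[OF r01 ap(1,2) bp(1,2)] ap(3) by (simp add: FX_def map_pmf_comp add.assoc)
    qed
    also have "\<dots> = bind_pmf (bernoulli_pmf (p i)) (\<lambda>x. map_pmf (\<lambda>s. s + of_bool x) (bind_pmf R FX))"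
      by (subst bind_commute_pmf) (simp add: map_bind_pmf)
    finally show ?thesis using IS_insert[OF insert.hyps] R1 by simp
  qed
  have C2: "indep_ind_sum (insert i F) q = bind_pmf R' FY"
  proof -
    have "bind_pmf R' FY = bind_pmf R (\<lambda>t. bind_pmf (stp r a b t) FY)"
      unfolding R'_def by (simp add: bind_assoc_pmf)
    also have "\<dots> = bind_pmf R (\<lambda>t. bind_pmf (bernoulli_pmf (q i)) (\<lambda>x. map_pmf (\<lambda>s. s + of_bool x) (FY t)))"
    proof (rule bind_pmf_cong[OF refl])
      fix t :: "nat \<times> nat \<times> nat"
      obtain m u v where t: "t = (m,u,v)" by (cases t) auto
      show "bind_pmf (stp r a b t) FY = bind_pmf (bernoulli_pmf (q i)) (\<lambda>x. map_pmf (\<lambda>s. s + of_bool x) (FY t))"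
        unfolding t repY[OF r01 ap(1,2) bp(1,2)] bp(3) by (simp add: FY_def map_pmf_comp add.assoc)
    qed
    also have "\<dots> = bind_pmf (bernoulli_pmf (q i)) (\<lambda>x. map_pmf (\<lambda>s. s + of_bool x) (bind_pmf R FY))"
      by (subst bind_commute_pmf) (simp add: map_bind_pmf)
    finally show ?thesis using IS_insert[OF insert.hyps] R2 by simp
  qed
  have C3: "map_pmf fst R' = binomial_pmf (card (insert i F)) r"
  proof -
    have "map_pmf fst R' = bind_pmf R (\<lambda>t. map_pmf fst (stp r a b t))"
      unfolding R'_def by (simp add: map_bind_pmf)
    also have "\<dots> = bind_pmf R (\<lambda>t. map_pmf (\<lambda>z. if z then Suc (fst t) else fst t) (bernoulli_pmf r))"
    proof (rule bind_pmf_cong[OF refl])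
      fix t :: "nat \<times> nat \<times> nat"
      obtain m u v where t: "t = (m,u,v)" by (cases t) auto
      show "map_pmf fst (stp r a b t) = map_pmf (\<lambda>z. if z then Suc (fst t) else fst t) (bernoulli_pmf r)"
        unfolding t by (simp only: stp_fst fst_conv)
    qed
    also have "\<dots> = bind_pmf (map_pmf fst R) (\<lambda>m. map_pmf (\<lambda>z. if z then Suc m else m) (bernoulli_pmf r))"
      by (simp add: bind_map_pmf)
    also have "\<dots> = binomial_pmf (Suc (card F)) r"
      unfolding R3 using r01
      by (subst binomial_pmf_Suc) (auto simp: map_pmf_def intro!: bind_pmf_cong[OF refl] | subst bind_commute_pmf)+
    finally show ?thesis using insert.hyps by simp
  qed
  have C4: "finite (set_pmf R')" unfolding R'_def using R4 stp_fin by simp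
  have E1: "measure_pmf.expectation R' W1 = measure_pmf.expectation R W1 + (p i - q i)"
  proof -
    have "measure_pmf.expectation R' W1 = measure_pmf.expectation R (\<lambda>t. measure_pmf.expectation (stp r a b t) W1)"
      unfolding R'_def using R4 stp_fin by (simp add: integral_bind_fin)
    also have "\<dots> = measure_pmf.expectation R (\<lambda>t. W1 t + 0 * W1 t + (p i - q i))"
    proof (rule Bochner_Integration.integral_cong[OF refl])
      fix t :: "nat \<times> nat \<times> nat"
      obtain m u v where t: "t = (m,u,v)" by (cases t) auto
      show "measure_pmf.expectation (stp r a b t) W1 = W1 t + 0 * W1 t + (p i - q i)"
        unfolding t W1_def using stp_E1[OF r01 ap(1,2) bp(1,2), of m u v] dd by simp
    qed
    also have "\<dots> = measure_pmf.expectation R W1 + 0 * measure_pmf.expectation R W1 + (p i - q i)"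
      by (rule E_lin[OF R4])
    also have "\<dots> = measure_pmf.expectation R W1 + (p i - q i)" by simp
    finally show ?thesis .
  qed
  have E2: "measure_pmf.expectation R' W2 = measure_pmf.expectation R W2 + 2 * (p i - q i) * measure_pmf.expectation R W1 + \<bar>p i - q i\<bar>"
  proof -
    have "measure_pmf.expectation R' W2 = measure_pmf.expectation R (\<lambda>t. measure_pmf.expectation (stp r a b t) W2)"
      unfolding R'_def using R4 stp_fin by (simp add: integral_bind_fin)
    also have "\<dots> = measure_pmf.expectation R (\<lambda>t. W2 t + (2 * (p i - q i)) * W1 t + \<bar>p i - q i\<bar>)"
    proof (rule Bochner_Integration.integral_cong[OF refl])
      fix t :: "nat \<times> nat \<times> nat"
      obtain m u v where t: "t = (m,u,v)" by (cases t) auto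
      show "measure_pmf.expectation (stp r a b t) W2 = W2 t + (2 * (p i - q i)) * W1 t + \<bar>p i - q i\<bar>"
        unfolding t W1_def W2_def prod.case stp_E2[OF r01 ap(1,2) bp(1,2), of m u v] dd by (simp add: algebra_simps)
    qed
    also have "\<dots> = measure_pmf.expectation R W2 + 2 * (p i - q i) * measure_pmf.expectation R W1 + \<bar>p i - q i\<bar>"
      by (rule E_lin[OF R4])
    finally show ?thesis .
  qed
  define S where "S = (\<Sum>i\<in>F. p i - q i)"
  define T where "T = (\<Sum>i\<in>F. \<bar>p i - q i\<bar>)"
  have sS: "(\<Sum>i\<in>insert i F. p i - q i) = (p i - q i) + S" unfolding S_def using insert.hyps by simp
  have sT: "(\<Sum>i\<in>insert i F. \<bar>p i - q i\<bar>) = \<bar>p i - q i\<bar> + T" unfolding T_def using insert.hyps by simp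
  have C5: "measure_pmf.expectation R' W1 = (\<Sum>i\<in>insert i F. p i - q i)" using E1 R5 sS S_def by simp
  have C6: "measure_pmf.expectation R' W2 \<le> (\<Sum>i\<in>insert i F. p i - q i)^2 + (\<Sum>i\<in>insert i F. \<bar>p i - q i\<bar>)"
  proof -
    have "measure_pmf.expectation R' W2 \<le> S^2 + T + 2 * (p i - q i) * S + \<bar>p i - q i\<bar>"
      using E2 R5 R6 unfolding S_def[symmetric] T_def[symmetric] by simp
    also have "\<dots> \<le> ((p i - q i) + S)^2 + (\<bar>p i - q i\<bar> + T)"
    proof -
      have "0 \<le> (p i - q i)^2" by simp
      thus ?thesis by (simp add: power2_eq_square algebra_simps)
    qed
    finally show ?thesis unfolding sS sT .
  qed
  show ?case using C1 C2 C3 C4 C5 C6 by blast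
qed


lemma E_inv_bin:
  assumes "0 < r" "r \<le> 1"
  shows "measure_pmf.expectation (binomial_pmf n r) (\<lambda>m. 1 / (real m + 1)) \<le> 1 / ((real n + 1) * r)"
proof -
  define g where "g k = real (Suc n choose k) * r^k * (1-r)^(Suc n - k)" for k
  have sub: "set_pmf (binomial_pmf n r) \<subseteq> {..n}" using assms by (auto simp: set_pmf_binomial_eq split: if_splits)
  have "measure_pmf.expectation (binomial_pmf n r) (\<lambda>m. 1 / (real m + 1))
        = (\<Sum>m\<le>n. 1 / (real m + 1) * pmf (binomial_pmf n r) m)"
    using sub by (intro integral_measure_pmf_real) auto
  also have "\<dots> = (\<Sum>m\<le>n. g (Suc m) / ((real n + 1) * r))"
  proof (rule sum.cong[OF refl])
    fix m assume "m \<in> {..n}"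
    have c: "real (Suc m) * real (Suc n choose Suc m) = real (Suc n) * real (n choose m)"
      using Suc_times_binomial[of m n] by (metis of_nat_mult)
    have "1 / (real m + 1) * pmf (binomial_pmf n r) m = real (n choose m) / (real m + 1) * r^m * (1-r)^(n-m)"
      using assms by simp
    also have "real (n choose m) / (real m + 1) = real (Suc n choose Suc m) / (real n + 1)"
      using c by (simp add: field_simps)
    also have "real (Suc n choose Suc m) / (real n + 1) * r^m * (1-r)^(n-m) = g (Suc m) / ((real n + 1) * r)"
    proof -
      have gs: "g (Suc m) = real (Suc n choose Suc m) * (r * r^m) * (1-r)^(n-m)"
        by (simp only: g_def power_Suc diff_Suc_Suc)
      have gen: "\<And>X y z::real. X / (real n + 1) * z * y = X * (r * z) * y / ((real n + 1) * r)"
      proof -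
        fix X y z :: real
        have "X * (r * z) * y / ((real n + 1) * r) = (r * (X * z * y)) / (r * (real n + 1))"
          by (simp add: ac_simps)
        also have "\<dots> = X * z * y / (real n + 1)" using assms by (intro mult_divide_mult_cancel_left) simp
        finally show "X / (real n + 1) * z * y = X * (r * z) * y / ((real n + 1) * r)" by simp
      qed
      show ?thesis unfolding gs by (rule gen)
    qed
    finally show "1 / (real m + 1) * pmf (binomial_pmf n r) m = g (Suc m) / ((real n + 1) * r)" .
  qed
  also have "\<dots> = (\<Sum>m\<le>n. g (Suc m)) / ((real n + 1) * r)" by (simp add: sum_divide_distrib)
  also have "\<dots> \<le> 1 / ((real n + 1) * r)"
  proof (rule divide_right_mono)
    have "(\<Sum>k\<le>Suc n. g k) = (r + (1-r))^(Suc n)" unfolding g_def by (simp only: binomial_ring)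
    hence "(\<Sum>k\<le>Suc n. g k) = 1" by simp
    moreover have "(\<Sum>k\<le>Suc n. g k) = g 0 + (\<Sum>m\<le>n. g (Suc m))" by (rule sum.atMost_Suc_shift)
    moreover have "g 0 \<ge> 0" unfolding g_def using assms by simp
    ultimately show "(\<Sum>m\<le>n. g (Suc m)) \<le> 1" by linarith
    show "0 \<le> (real n + 1) * r" using assms by simp
  qed
  finally show ?thesis .
qed

lemma prob_bind_fin:
  assumes "finite (set_pmf R)" "\<And>t. finite (set_pmf (F t))"
  shows "measure_pmf.prob (bind_pmf R F) A = measure_pmf.expectation R (\<lambda>t. measure_pmf.prob (F t) A)"
proof -
  have "measure_pmf.prob (bind_pmf R F) A = measure_pmf.expectation (bind_pmf R F) (indicator A)" by simp
  also have "\<dots> = measure_pmf.expectation R (\<lambda>t. measure_pmf.expectation (F t) (indicator A))"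
    by (rule integral_bind_fin) (use assms in auto)
  also have "\<dots> = measure_pmf.expectation R (\<lambda>t. measure_pmf.prob (F t) A)"
  proof (rule Bochner_Integration.integral_cong[OF refl])
    fix t show "measure_pmf.expectation (F t) (indicator A) = measure_pmf.prob (F t) A" by simp
  qed
  finally show ?thesis .
qed

lemma FX_fin: "finite (set_pmf (FX t))" unfolding FX_def by (auto split: prod.split)
lemma FY_fin: "finite (set_pmf (FY t))" unfolding FY_def by (auto split: prod.split)

lemma tv_from_coupling:
  assumes R4: "finite (set_pmf R)" and R3: "map_pmf fst R = binomial_pmf n r"
    and r: "0 < r" "r \<le> 1"
    and W: "measure_pmf.expectation R W2 \<le> Wb" "Wb > 0"
  shows "tv_dist (bind_pmf R FX) (bind_pmf R FY) \<le> sqrt ((2 / ((real n + 1) * r)) * Wb)"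
proof -
  define Tb where "Tb = 2 / ((real n + 1) * r)"
  have Tb: "Tb > 0" unfolding Tb_def using r by simp
  define c where "c t = cb (fst t)" for t :: "nat \<times> nat \<times> nat"
  define s where "s = sqrt (Tb / Wb)"
  have s: "s > 0" unfolding s_def using Tb W by simp
  have i: "integrable (measure_pmf R) h" for h :: "nat \<times> nat \<times> nat \<Rightarrow> real" using R4 by (rule integrable_measure_pmf_finite)
  have Ec2: "measure_pmf.expectation R (\<lambda>t. (c t)^2) \<le> Tb"
  proof -
    have "measure_pmf.expectation R (\<lambda>t. (c t)^2) \<le> measure_pmf.expectation R (\<lambda>t. 2 / (real (fst t) + 1))"
      by (rule integral_mono) (auto simp: i c_def cb_sq)
    also have "\<dots> = measure_pmf.expectation (map_pmf fst R) (\<lambda>m. 2 * (1 / (real m + 1)))" by simp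
    also have "\<dots> = 2 * measure_pmf.expectation (binomial_pmf n r) (\<lambda>m. 1 / (real m + 1))"
      unfolding R3 by (rule integral_mult_right_zero)
    also have "\<dots> \<le> 2 * (1 / ((real n + 1) * r))" by (rule mult_left_mono[OF E_inv_bin[OF r]]) simp
    finally show ?thesis unfolding Tb_def by simp
  qed
  have key: "measure_pmf.expectation R (\<lambda>t. \<bar>W1 t\<bar> * c t) \<le> sqrt (Tb * Wb)"
  proof -
    have "measure_pmf.expectation R (\<lambda>t. \<bar>W1 t\<bar> * c t) \<le> measure_pmf.expectation R (\<lambda>t. (s * W2 t + (c t)^2 / s) / 2)"
    proof (rule integral_mono)
      fix t :: "nat \<times> nat \<times> nat"
      have w2: "W2 t = (W1 t)^2" unfolding W1_def W2_def by (simp split: prod.split)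
      have "0 \<le> (s * \<bar>W1 t\<bar> - c t)^2" by simp
      hence "2 * s * (\<bar>W1 t\<bar> * c t) \<le> s^2 * (W1 t)^2 + (c t)^2"
        by (simp add: power2_eq_square algebra_simps)
      hence "\<bar>W1 t\<bar> * c t \<le> (s^2 * (W1 t)^2 + (c t)^2) / (2 * s)" using s by (simp add: field_simps)
      also have "(s^2 * (W1 t)^2 + (c t)^2) / (2 * s) = (s * W2 t + (c t)^2 / s) / 2"
        using s unfolding w2 by (simp add: field_simps power2_eq_square)
      finally show "\<bar>W1 t\<bar> * c t \<le> (s * W2 t + (c t)^2 / s) / 2" .
    qed (simp_all add: i)
    also have "\<dots> = (s * measure_pmf.expectation R W2 + measure_pmf.expectation R (\<lambda>t. (c t)^2) / s) / 2"
    proof -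
      have "measure_pmf.expectation R (\<lambda>t. (s * W2 t + (c t)^2 / s) / 2)
          = measure_pmf.expectation R (\<lambda>t. 0 + (s/2) * W2 t + (1 / (2 * s)) * (c t)^2)"
        by (rule Bochner_Integration.integral_cong[OF refl]) (simp add: field_simps)
      also have "\<dots> = measure_pmf.expectation R (\<lambda>t. 0 + (s/2) * W2 t) + (1 / (2 * s)) * measure_pmf.expectation R (\<lambda>t. (c t)^2)"
        by (subst Bochner_Integration.integral_add) (simp_all add: i)
      also have "\<dots> = (s/2) * measure_pmf.expectation R W2 + (1 / (2 * s)) * measure_pmf.expectation R (\<lambda>t. (c t)^2)"
        by simp
      finally show ?thesis using s by (simp add: field_simps)
    qed
    also have "\<dots> \<le> (s * Wb + Tb / s) / 2"
      using W(1) Ec2 s by (intro divide_right_mono add_mono mult_left_mono divide_right_mono) auto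
    also have "\<dots> = sqrt (Tb * Wb)"
    proof -
      have "s * Wb = sqrt (Tb * Wb)" unfolding s_def using W Tb
        by (simp add: real_sqrt_divide field_simps real_sqrt_mult)
      moreover have "Tb / s = sqrt (Tb * Wb)" unfolding s_def using W Tb
        by (simp add: real_sqrt_divide field_simps real_sqrt_mult)
      ultimately show ?thesis by simp
    qed
    finally show ?thesis .
  qed
  have "\<bar>measure_pmf.prob (bind_pmf R FX) A - measure_pmf.prob (bind_pmf R FY) A\<bar> \<le> sqrt (Tb * Wb)" for A
  proof -
    have "measure_pmf.prob (bind_pmf R FX) A - measure_pmf.prob (bind_pmf R FY) A
        = measure_pmf.expectation R (\<lambda>t. measure_pmf.prob (FX t) A - measure_pmf.prob (FY t) A)"
      using R4 by (simp add: prob_bind_fin FX_fin FY_fin Bochner_Integration.integral_diff i)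
    also have "\<bar>\<dots>\<bar> \<le> measure_pmf.expectation R (\<lambda>t. \<bar>measure_pmf.prob (FX t) A - measure_pmf.prob (FY t) A\<bar>)"
      using integral_norm_bound[of R "\<lambda>t. measure_pmf.prob (FX t) A - measure_pmf.prob (FY t) A"] by simp
    also have "\<dots> \<le> measure_pmf.expectation R (\<lambda>t. \<bar>W1 t\<bar> * c t)"
    proof (rule integral_mono)
      fix t :: "nat \<times> nat \<times> nat"
      obtain m u v where t: "t = (m,u,v)" by (cases t) auto
      show "\<bar>measure_pmf.prob (FX t) A - measure_pmf.prob (FY t) A\<bar> \<le> \<bar>W1 t\<bar> * c t"
        unfolding t FX_def FY_def W1_def c_def using smooth_shift[where u=u and m=m and v=v and A=A] by simp
    qed (simp_all add: i)
    finally show ?thesis using key by linarith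
  qed
  hence "tv_dist (bind_pmf R FX) (bind_pmf R FY) \<le> sqrt (Tb * Wb)"
    unfolding tv_dist_def by (intro cSUP_least) auto
  thus ?thesis unfolding Tb_def .
qed


lemma rank_count:
  fixes B :: "nat set" and \<sigma> :: "nat \<Rightarrow> nat"
  assumes "finite B" "inj_on \<sigma> B"
  shows "card {i\<in>B. card {i'\<in>B. \<sigma> i' < \<sigma> i} < m} = min m (card B)"
proof -
  define rk where "rk i = card {i'\<in>B. \<sigma> i' < \<sigma> i}" for i
  have lt: "rk i < rk i'" if "i \<in> B" "i' \<in> B" "\<sigma> i < \<sigma> i'" for i i'
  proof -
    have "{x\<in>B. \<sigma> x < \<sigma> i} \<subset> {x\<in>B. \<sigma> x < \<sigma> i'}" using that by auto
    thus ?thesis unfolding rk_def using assms(1) by (intro psubset_card_mono) auto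
  qed
  have inj: "inj_on rk B"
  proof (rule inj_onI)
    fix i i' assume i: "i \<in> B" "i' \<in> B" "rk i = rk i'"
    show "i = i'"
    proof (rule ccontr)
      assume "i \<noteq> i'"
      hence "\<sigma> i \<noteq> \<sigma> i'" using assms(2) i by (meson inj_on_eq_iff)
      hence "\<sigma> i < \<sigma> i' \<or> \<sigma> i' < \<sigma> i" by arith
      thus False using lt i by fastforce
    qed
  qed
  have sub: "rk ` B \<subseteq> {..<card B}"
  proof
    fix x assume "x \<in> rk ` B"
    then obtain i where i: "i \<in> B" "x = rk i" by auto
    have "{i'\<in>B. \<sigma> i' < \<sigma> i} \<subseteq> B - {i}" by auto
    hence "rk i \<le> card (B - {i})" unfolding rk_def using assms(1) by (intro card_mono) auto
    also have "\<dots> < card B" using i assms(1) by (intro card_Diff1_less)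
    finally show "x \<in> {..<card B}" using i by simp
  qed
  have img: "rk ` B = {..<card B}"
    using sub inj assms(1) by (intro card_subset_eq) (auto simp: card_image)
  have "card {i\<in>B. rk i < m} = card (rk ` {i\<in>B. rk i < m})"
    using inj by (intro card_image[symmetric]) (auto intro: inj_on_subset)
  also have "rk ` {i\<in>B. rk i < m} = {..<card B} \<inter> {..<m}" using img by auto
  also have "{..<card B} \<inter> {..<m} = {..<min m (card B)}" by auto
  also have "card \<dots> = min m (card B)" by simp
  finally show ?thesis unfolding rk_def .
qed

lemma Ij_floor:
  assumes "0 < k" "x \<in> Ij k j"
  shows "j = nat \<lfloor>real k * x\<rfloor>"
proof (cases "j < k div 2")
  case True
  hence "real j / real k \<le> x" "x < (real j + 1) / real k" using assms unfolding Ij_def by auto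
  hence "real j \<le> real k * x" "real k * x < real j + 1" using assms(1) by (auto simp: field_simps)
  hence "\<lfloor>real k * x\<rfloor> = int j" by (simp add: floor_eq_iff)
  thus ?thesis by simp
next
  case False
  hence x: "real j / real k \<le> x" "x \<le> 1/2" using assms unfolding Ij_def by auto
  hence jk: "real j \<le> real k * x" "real k * x \<le> real k / 2" using assms(1) by (auto simp: field_simps)
  have "real j \<le> real k / 2" using jk by linarith
  hence "j \<le> k div 2" by linarith
  hence jeq: "j = k div 2" using False by simp
  have "real k / 2 < real (k div 2) + 1" by linarith
  hence "\<lfloor>real k * x\<rfloor> = int j" using jk jeq by (simp add: floor_eq_iff)
  thus ?thesis by simp
qed


lemma blk_sub: "blk k p n j \<subseteq> {..<n}" unfolding blk_def by auto
lemma blk_fin: "finite (blk k p n j)" by (rule finite_subset[OF blk_sub]) simp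

lemma blk_j: assumes "0 < k" "i \<in> blk k p n j" shows "j = nat \<lfloor>real k * p i\<rfloor>"
proof -
  have "p i \<in> Ij k j" using assms(2) unfolding blk_def by simp
  thus ?thesis by (rule Ij_floor[OF assms(1)])
qed

lemma blk_the:
  assumes "0 < k" "j \<in> jrange \<alpha> k" "i \<in> blk k p n j"
  shows "(THE j'. j' \<in> jrange \<alpha> k \<and> i \<in> blk k p n j') = j"
proof (rule the_equality)
  show "j \<in> jrange \<alpha> k \<and> i \<in> blk k p n j" using assms by simp
  fix j' assume "j' \<in> jrange \<alpha> k \<and> i \<in> blk k p n j'"
  hence "j' = nat \<lfloor>real k * p i\<rfloor>" using blk_j[OF assms(1)] by blast
  moreover have "j = nat \<lfloor>real k * p i\<rfloor>" using blk_j[OF assms(1,3)] .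
  ultimately show "j' = j" by simp
qed

lemma q_blk:
  assumes "0 < k" "j \<in> jrange \<alpha> k" "i \<in> blk k p n j"
  shows "q_round \<alpha> k p n \<sigma> i = (if card {i'\<in>blk k p n j. \<sigma> i' < \<sigma> i} < mj k p n j
                                 then (real j + 1) / real k else real j / real k)"
proof -
  have "i \<in> M1 \<alpha> k p n" using assms unfolding M1_def by auto
  thus ?thesis unfolding q_round_def by (simp only: if_P Let_def blk_the[OF assms])
qed

lemma p_blk:
  assumes "0 < k" "i \<in> blk k p n j"
  shows "real j / real k \<le> p i" "p i \<le> (real j + 1) / real k" "p i \<le> 1/2"
proof -
  have pI: "p i \<in> Ij k j" using assms unfolding blk_def by auto
  show "real j / real k \<le> p i" using pI unfolding Ij_def by (cases "j < k div 2") auto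
  show "p i \<le> (real j + 1) / real k" "p i \<le> 1/2"
  proof -
    have "(p i \<le> (real j + 1) / real k) \<and> p i \<le> 1/2"
    proof (cases "j < k div 2")
      case True
      hence a: "p i < (real j + 1) / real k" using pI unfolding Ij_def by auto
      have "j + 1 \<le> k div 2" using True by simp
      hence "real j + 1 \<le> real (k div 2)" by (metis of_nat_le_iff of_nat_Suc Suc_eq_plus1 add.commute)
      also have "real (k div 2) \<le> real k / 2"
      proof -
        have "2 * (k div 2) \<le> k" by simp
        hence "real (2 * (k div 2)) \<le> real k" by (simp only: of_nat_le_iff)
        thus ?thesis by simp
      qed
      finally have "(real j + 1) / real k \<le> 1/2" using assms(1) by (simp add: field_simps)
      thus ?thesis using a by linarith
    next
      case False
      hence a: "p i \<le> 1/2" using pI unfolding Ij_def by auto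
      have "k \<le> 2 * j + 1" using False by simp
      hence "real k \<le> real (2 * j + 1)" by (simp only: of_nat_le_iff)
      hence "real k / 2 \<le> real j + 1" by simp
      hence "1/2 \<le> (real j + 1) / real k" using assms(1) by (simp add: field_simps)
      thus ?thesis using a by linarith
    qed
    thus "p i \<le> (real j + 1) / real k" "p i \<le> 1/2" by auto
  qed
qed

lemma blk_sum:
  assumes k: "0 < k" and j: "j \<in> jrange \<alpha> k" and inj: "inj_on \<sigma> {..<n}"
  shows "0 \<le> (\<Sum>i\<in>blk k p n j. p i - q_round \<alpha> k p n \<sigma> i)"
        "(\<Sum>i\<in>blk k p n j. p i - q_round \<alpha> k p n \<sigma> i) \<le> 1 / real k"
proof -
  define B where "B = blk k p n j"
  define m where "m = mj k p n j"
  define P where "P i = (card {i'\<in>B. \<sigma> i' < \<sigma> i} < m)" for i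
  have finB: "finite B" unfolding B_def by (rule blk_fin)
  have injB: "inj_on \<sigma> B" unfolding B_def by (rule inj_on_subset[OF inj blk_sub])
  have q: "q_round \<alpha> k p n \<sigma> i = real j / real k + (if P i then 1 / real k else 0)" if "i \<in> B" for i
  proof -
    have i: "i \<in> blk k p n j" using that unfolding B_def .
    have e: "q_round \<alpha> k p n \<sigma> i = (if P i then (real j + 1) / real k else real j / real k)"
      unfolding P_def B_def m_def by (rule q_blk[OF k j i])
    show ?thesis unfolding e by (simp add: add_divide_distrib)
  qed
  have S: "Sj k p n j = (\<Sum>i\<in>B. p i - real j / real k)" unfolding Sj_def B_def ..
  have "(\<Sum>i\<in>B. p i - q_round \<alpha> k p n \<sigma> i) = (\<Sum>i\<in>B. (p i - real j / real k) - (if P i then 1 / real k else 0))"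
    using q by (intro sum.cong) auto
  also have "\<dots> = Sj k p n j - (\<Sum>i\<in>B. (if P i then 1 / real k else 0))"
    unfolding S by (simp add: sum_subtractf)
  also have "(\<Sum>i\<in>B. (if P i then 1 / real k else 0)) = real (card {i\<in>B. P i}) / real k"
  proof -
    have "(\<Sum>i\<in>B. (if P i then 1 / real k else 0)) = (\<Sum>i\<in>{i\<in>B. P i}. 1 / real k)"
      using finB by (rule sum.inter_filter[symmetric])
    thus ?thesis by simp
  qed
  also have "card {i\<in>B. P i} = min m (card B)"
    unfolding P_def by (rule rank_count[OF finB injB])
  finally have eq: "(\<Sum>i\<in>B. p i - q_round \<alpha> k p n \<sigma> i) = Sj k p n j - real (min m (card B)) / real k" .
  have t: "0 \<le> p i - real j / real k \<and> p i - real j / real k \<le> 1 / real k" if "i \<in> B" for i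
  proof -
    have "(real j+1)/real k - real j/real k = 1/real k" by (simp add: diff_divide_distrib[symmetric])
    thus ?thesis using p_blk[OF k, of i p n j] that unfolding B_def by linarith
  qed
  have S0: "0 \<le> Sj k p n j" unfolding S using t by (intro sum_nonneg) auto
  have S1: "Sj k p n j \<le> real (card B) / real k"
  proof -
    have "Sj k p n j \<le> (\<Sum>i\<in>B. 1 / real k)" unfolding S using t by (intro sum_mono) auto
    thus ?thesis by simp
  qed
  have kS0: "0 \<le> real k * Sj k p n j" using S0 k by simp
  have kS1: "real k * Sj k p n j \<le> real (card B)"
  proof -
    have "real k * Sj k p n j \<le> real k * (real (card B) / real k)" using S1 k by (intro mult_left_mono) auto
    thus ?thesis using k by simp
  qed
  have mr: "real m = of_int \<lfloor>real k * Sj k p n j\<rfloor>" unfolding m_def mj_def using kS0 by simp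
  have fl: "of_int \<lfloor>real k * Sj k p n j\<rfloor> \<le> real k * Sj k p n j"
           "real k * Sj k p n j < of_int \<lfloor>real k * Sj k p n j\<rfloor> + 1" by linarith+
  have "real m \<le> real (card B)" using mr fl kS1 by linarith
  hence "min m (card B) = m" by simp
  hence eq': "(\<Sum>i\<in>B. p i - q_round \<alpha> k p n \<sigma> i) = Sj k p n j - real m / real k"
    using eq by simp
  have gen: "\<And>Y::real. Y - real m / real k = (real k * Y - real m) / real k"
    using k by (simp add: diff_divide_distrib)
  have eq2: "(\<Sum>i\<in>B. p i - q_round \<alpha> k p n \<sigma> i) = (real k * Sj k p n j - real m) / real k"
    unfolding eq' by (rule gen)
  have "0 \<le> real k * Sj k p n j - real m" "real k * Sj k p n j - real m \<le> 1" using mr fl by linarith+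
  hence d: "0 \<le> real k * Sj k p n j - real m" "real k * Sj k p n j - real m \<le> 1" .
  have kk: "0 < real k" using k by simp
  show "0 \<le> (\<Sum>i\<in>blk k p n j. p i - q_round \<alpha> k p n \<sigma> i)"
    unfolding B_def[symmetric] eq2 using d(1) kk by (rule divide_nonneg_pos)
  show "(\<Sum>i\<in>blk k p n j. p i - q_round \<alpha> k p n \<sigma> i) \<le> 1 / real k"
    unfolding B_def[symmetric] eq2 using d(2) kk by (intro divide_right_mono) auto
qed


lemma numeric:
  fixes \<alpha> \<beta> kk nN j0 :: real
  assumes ab: "0 < \<alpha>" "\<alpha> < 1" "0 < \<beta>" "\<beta> < 1" "\<alpha> + \<beta> > 1"
    and k: "kk \<ge> 4" and nN: "nN > kk powr \<beta>" and j0: "j0 \<ge> kk powr \<alpha> / 2"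
  shows "sqrt (2 / ((nN + 1) * (j0 / kk)) * (1 + nN / kk))
         \<le> 3 * (kk powr (-(\<alpha> + \<beta> - 1) / 2) + kk powr (-\<alpha>) + kk powr (-1/2))"
proof -
  define E where "E = kk powr (\<alpha> + \<beta> - 1)"
  have k0: "kk > 0" using k by simp
  have E1: "E \<ge> 1" unfolding E_def using k ab by (intro ge_one_powr_ge_zero) auto
  have Epos: "E > 0" using E1 by simp
  have kb: "kk powr \<beta> > 0" using k0 by simp
  have ka: "kk powr \<alpha> > 0" using k0 by simp
  have nNpos: "nN > 0" using nN kb by linarith
  have j0pos: "j0 > 0" using j0 ka by linarith
  define r where "r = j0 / kk"
  have rpos: "r > 0" unfolding r_def using j0pos k0 by simp
  have X1: "2 / ((nN + 1) * r) * (1 + nN / kk) \<le> 2 / (nN * r) + 2 / (kk * r)"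
  proof -
    have "2 / ((nN + 1) * r) * (1 + nN / kk) = 2 / ((nN + 1) * r) + 2 / (kk * r) * (nN / (nN + 1))"
    proof -
      have "2 / ((nN + 1) * r) * (1 + nN / kk) = 2 / ((nN + 1) * r) + 2 / ((nN + 1) * r) * (nN / kk)"
        by (simp add: distrib_left)
      moreover have "2 / ((nN + 1) * r) * (nN / kk) = (2 * nN) / (((nN + 1) * r) * kk)"
        by (simp add: times_divide_times_eq)
      moreover have "2 / (kk * r) * (nN / (nN + 1)) = (2 * nN) / ((kk * r) * (nN + 1))"
        by (simp add: times_divide_times_eq)
      moreover have "((nN + 1) * r) * kk = (kk * r) * (nN + 1)" by (simp add: ac_simps)
      ultimately show ?thesis by simp
    qed
    also have "2 / ((nN + 1) * r) \<le> 2 / (nN * r)"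
      using rpos nNpos by (intro divide_left_mono mult_right_mono) auto
    also have "2 / (kk * r) * (nN / (nN + 1)) \<le> 2 / (kk * r) * 1"
      using rpos nNpos k0 by (intro mult_left_mono) auto
    finally show ?thesis by simp
  qed
  have EkB: "E = kk powr \<alpha> * kk powr \<beta> / kk"
    unfolding E_def using k0 by (simp add: powr_diff powr_add)
  have b1: "nN * r \<ge> E / 2"
  proof -
    have "E / 2 = kk powr \<beta> * ((kk powr \<alpha> / 2) / kk)" unfolding EkB by (simp add: field_simps)
    also have "\<dots> \<le> nN * (j0 / kk)"
      using nN j0 kb k0 nNpos by (intro mult_mono divide_right_mono) auto
    finally show ?thesis unfolding r_def .
  qed
  have b2: "kk * r \<ge> E / 2"
  proof -
    have "E \<le> kk powr \<alpha>" unfolding E_def using ab k by (intro powr_mono) auto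
    thus ?thesis unfolding r_def using j0 k0 by simp
  qed
  have t1: "2 / (nN * r) \<le> 4 / E"
  proof -
    have "2 / (nN * r) \<le> 2 / (E / 2)" using b1 Epos by (intro divide_left_mono) auto
    thus ?thesis by simp
  qed
  have t2: "2 / (kk * r) \<le> 4 / E"
  proof -
    have "2 / (kk * r) \<le> 2 / (E / 2)" using b2 Epos by (intro divide_left_mono) auto
    thus ?thesis by simp
  qed
  have X: "2 / ((nN + 1) * r) * (1 + nN / kk) \<le> 8 / E" using X1 t1 t2 by simp
  have sE: "sqrt E = kk powr ((\<alpha> + \<beta> - 1) / 2)"
    unfolding E_def using k0 by (simp add: powr_half_sqrt[symmetric] powr_powr)
  have sEpos: "sqrt E > 0" using Epos by simp
  have "sqrt (2 / ((nN + 1) * r) * (1 + nN / kk)) \<le> sqrt (8 / E)" using X by (rule real_sqrt_le_mono)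
  also have "sqrt (8 / E) = sqrt 8 / sqrt E" by (simp add: real_sqrt_divide)
  also have "\<dots> \<le> 3 / sqrt E"
  proof -
    have s83: "sqrt 8 \<le> (3::real)" by (rule power2_le_imp_le) simp_all
    show ?thesis by (rule divide_right_mono[OF s83]) (use sEpos in simp)
  qed
  also have "3 / sqrt E = 3 * kk powr (-(\<alpha> + \<beta> - 1) / 2)"
  proof -
    have e: "-(\<alpha> + \<beta> - 1) / 2 = -((\<alpha> + \<beta> - 1) / 2)" by (simp only: minus_divide_left)
    have "kk powr (-(\<alpha> + \<beta> - 1) / 2) = inverse (sqrt E)"
      unfolding e sE by (rule powr_minus)
    thus ?thesis by (simp only: divide_inverse)
  qed
  also have "\<dots> \<le> 3 * (kk powr (-(\<alpha> + \<beta> - 1) / 2) + kk powr (-\<alpha>) + kk powr (-1/2))"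
    by simp
  finally show ?thesis unfolding r_def .
qed


lemma floor_half: fixes x :: real assumes "x \<ge> 1" shows "of_int \<lfloor>x\<rfloor> \<ge> x / 2" "\<lfloor>x\<rfloor> \<ge> 1"
proof -
  show f1: "\<lfloor>x\<rfloor> \<ge> 1" using assms by simp
  have "x < of_int \<lfloor>x\<rfloor> + 1" by linarith
  moreover have "(1::real) \<le> of_int \<lfloor>x\<rfloor>" using f1 by simp
  ultimately show "of_int \<lfloor>x\<rfloor> \<ge> x / 2" by linarith
qed

theorem mainTheorem13:
  fixes \<alpha> \<beta> :: real
  assumes "0 < \<alpha>" "\<alpha> < 1" "0 < \<beta>" "\<beta> < 1" "\<alpha> + \<beta> > 1"
  shows "\<exists>C::real. \<exists>K::nat. \<forall>k\<ge>K. \<forall>(n::nat) (p::nat \<Rightarrow> real) (\<sigma>::nat \<Rightarrow> nat).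
           0 < k \<longrightarrow> (\<forall>i<n. 0 \<le> p i \<and> p i \<le> 1) \<longrightarrow> inj_on \<sigma> {..<n} \<longrightarrow>
           real (card (M1 \<alpha> k p n)) > real k powr \<beta> \<longrightarrow>
           tv_dist (indep_ind_sum (M1 \<alpha> k p n) p)
                   (indep_ind_sum (M1 \<alpha> k p n) (q_round \<alpha> k p n \<sigma>))
             \<le> C * (real k powr (-(\<alpha> + \<beta> - 1) / 2) + real k powr (-\<alpha>) + real k powr (-1/2))"
proof (intro exI[of _ "3::real"] exI[of _ "4::nat"] allI impI)
  fix k n :: nat and p :: "nat \<Rightarrow> real" and \<sigma> :: "nat \<Rightarrow> nat"
  assume k4: "4 \<le> k" and k: "0 < k" and prange: "\<forall>i<n. 0 \<le> p i \<and> p i \<le> 1"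
    and inj: "inj_on \<sigma> {..<n}" and card: "real (card (M1 \<alpha> k p n)) > real k powr \<beta>"
  define N where "N = M1 \<alpha> k p n"
  define q where "q = q_round \<alpha> k p n \<sigma>"
  define j0 where "j0 = nat \<lfloor>real k powr \<alpha>\<rfloor>"
  define r where "r = real j0 / real k"
  have kr: "real k \<ge> 4" using k4 by simp
  have finN: "finite N"
  proof -
    have "N \<subseteq> {..<n}" unfolding N_def M1_def using blk_sub by blast
    thus ?thesis by (rule finite_subset) simp
  qed
  have "real k powr \<beta> > 0" using k by simp
  hence "card N > 0" using card unfolding N_def by linarith
  hence "N \<noteq> {}" by auto
  then obtain i0 where "i0 \<in> N" by auto
  then obtain j1 where j1: "j1 \<in> jrange \<alpha> k" unfolding N_def M1_def by auto
  hence j0le: "j0 \<le> k div 2" unfolding jrange_def j0_def by auto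
  have ka1: "real k powr \<alpha> \<ge> 1" using kr assms(1) by (intro ge_one_powr_ge_zero) auto
  have j0r: "real j0 \<ge> real k powr \<alpha> / 2" "j0 \<ge> 1"
  proof -
    have "of_int \<lfloor>real k powr \<alpha>\<rfloor> \<ge> real k powr \<alpha> / 2" "\<lfloor>real k powr \<alpha>\<rfloor> \<ge> 1" using floor_half[OF ka1] by auto
    thus "real j0 \<ge> real k powr \<alpha> / 2" "j0 \<ge> 1" unfolding j0_def by auto
  qed
  have rpos: "0 < r" unfolding r_def using j0r k by simp
  have rhalf: "r \<le> 1/2"
  proof -
    have "2 * j0 \<le> k" using j0le by simp
    hence "2 * real j0 \<le> real k" by (metis of_nat_le_iff of_nat_mult of_nat_numeral)
    thus ?thesis unfolding r_def using k by (simp add: field_simps)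
  qed
  have r1: "r < 1" using rhalf by simp
  have bounds: "r/2 \<le> p i \<and> p i \<le> 1 - r/2 \<and> r/2 \<le> q i \<and> q i \<le> 1 - r/2 \<and> \<bar>p i - q i\<bar> \<le> 1 / real k"
    if i: "i \<in> N" for i
  proof -
    obtain j where j: "j \<in> jrange \<alpha> k" "i \<in> blk k p n j" using i unfolding N_def M1_def by auto
    have jj: "j0 \<le> j" "j \<le> k div 2" using j(1) unfolding jrange_def j0_def by auto
    note pb = p_blk[OF k j(2)]
    have qv: "q i = real j / real k \<or> q i = (real j + 1) / real k"
      unfolding q_def using q_blk[OF k j(1) j(2), of \<sigma>] by auto
    have rj: "r \<le> real j / real k" unfolding r_def using jj k by (simp add: divide_right_mono)
    have j1k: "(real j + 1) / real k \<le> 3/4"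
    proof -
      have "2 * j \<le> k" using jj by simp
      hence "2 * real j \<le> real k" by (metis of_nat_le_iff of_nat_mult of_nat_numeral)
      hence "4 * (real j + 1) \<le> 3 * real k" using kr by (simp add: algebra_simps)
      thus ?thesis using k by (simp add: field_simps)
    qed
    have d1: "(real j + 1) / real k - real j / real k = 1 / real k" by (simp add: diff_divide_distrib[symmetric])
    have jk0: "0 \<le> real j / real k" by simp
    have jle: "real j / real k \<le> (real j + 1) / real k" using k by (intro divide_right_mono) auto
    have qb: "real j / real k \<le> q i" "q i \<le> (real j + 1) / real k" using qv jle by auto
    have a1: "r/2 \<le> p i" using pb rj rpos by linarith
    have a2: "p i \<le> 1 - r/2" using pb rhalf by linarith
    have a3: "r/2 \<le> q i" using qb rj rpos by linarith
    have a4: "q i \<le> 1 - r/2" using qb j1k rhalf by linarith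
    have a5: "\<bar>p i - q i\<bar> \<le> 1 / real k" using pb qb d1 by (simp add: abs_le_iff)
    show ?thesis using a1 a2 a3 a4 a5 by blast
  qed
  have S: "0 \<le> (\<Sum>i\<in>N. p i - q i)" "(\<Sum>i\<in>N. p i - q i) \<le> 1"
  proof -
    have dec: "(\<Sum>i\<in>N. p i - q i) = (\<Sum>j\<in>jrange \<alpha> k. (\<Sum>i\<in>blk k p n j. p i - q i))"
      unfolding N_def M1_def
    proof (rule sum.UNION_disjoint)
      show "finite (jrange \<alpha> k)" unfolding jrange_def by simp
      show "\<forall>j\<in>jrange \<alpha> k. finite (blk k p n j)" using blk_fin by blast
      show "\<forall>j\<in>jrange \<alpha> k. \<forall>j'\<in>jrange \<alpha> k. j \<noteq> j' \<longrightarrow> blk k p n j \<inter> blk k p n j' = {}"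
      proof (intro ballI impI)
        fix j j' :: nat assume "j \<noteq> j'"
        show "blk k p n j \<inter> blk k p n j' = {}"
        proof (rule ccontr)
          assume "blk k p n j \<inter> blk k p n j' \<noteq> {}"
          then obtain i where "i \<in> blk k p n j" "i \<in> blk k p n j'" by blast
          hence "j = nat \<lfloor>real k * p i\<rfloor>" "j' = nat \<lfloor>real k * p i\<rfloor>" using blk_j[OF k] by blast+
          thus False using \<open>j \<noteq> j'\<close> by simp
        qed
      qed
    qed
    have b: "0 \<le> (\<Sum>i\<in>blk k p n j. p i - q i) \<and> (\<Sum>i\<in>blk k p n j. p i - q i) \<le> 1 / real k"
      if "j \<in> jrange \<alpha> k" for j
      using blk_sum[OF k that inj, of p] unfolding q_def by simp
    show "0 \<le> (\<Sum>i\<in>N. p i - q i)" unfolding dec by (rule sum_nonneg) (use b in blast)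
    have "(\<Sum>i\<in>N. p i - q i) \<le> (\<Sum>j\<in>jrange \<alpha> k. 1 / real k)" unfolding dec by (rule sum_mono) (use b in blast)
    also have "\<dots> = real (card (jrange \<alpha> k)) / real k" by simp
    also have "\<dots> \<le> 1"
    proof -
      have c1: "card (jrange \<alpha> k) \<le> Suc (k div 2)" unfolding jrange_def by simp
      have c2: "Suc (k div 2) \<le> k" using k4 by presburger
      have "card (jrange \<alpha> k) \<le> k" using c1 c2 by linarith
      hence "real (card (jrange \<alpha> k)) \<le> real k" by simp
      thus ?thesis using k by simp
    qed
    finally show "(\<Sum>i\<in>N. p i - q i) \<le> 1" .
  qed
  have T: "(\<Sum>i\<in>N. \<bar>p i - q i\<bar>) \<le> real (card N) / real k"
  proof -
    have "(\<Sum>i\<in>N. \<bar>p i - q i\<bar>) \<le> (\<Sum>i\<in>N. 1 / real k)" using bounds by (intro sum_mono) auto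
    thus ?thesis by simp
  qed
  have pN: "\<forall>i\<in>N. r/2 \<le> p i \<and> p i \<le> 1 - r/2" and qN: "\<forall>i\<in>N. r/2 \<le> q i \<and> q i \<le> 1 - r/2"
    using bounds by auto
  obtain R where R1: "indep_ind_sum N p = bind_pmf R FX" and R2: "indep_ind_sum N q = bind_pmf R FY"
    and R3: "map_pmf fst R = binomial_pmf (card N) r" and R4: "finite (set_pmf R)"
    and R6: "measure_pmf.expectation R W2 \<le> (\<Sum>i\<in>N. p i - q i)^2 + (\<Sum>i\<in>N. \<bar>p i - q i\<bar>)"
    using coupling[OF finN rpos r1 pN qN] by blast
  define Wb where "Wb = 1 + real (card N) / real k"
  have Wb: "measure_pmf.expectation R W2 \<le> Wb" "Wb > 0"
  proof -
    have "(\<Sum>i\<in>N. p i - q i)^2 \<le> 1" using S by (simp add: power_le_one)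
    thus "measure_pmf.expectation R W2 \<le> Wb" using R6 T unfolding Wb_def by linarith
    show "Wb > 0" unfolding Wb_def by (simp add: add_pos_nonneg)
  qed
  have "tv_dist (indep_ind_sum N p) (indep_ind_sum N q) \<le> sqrt ((2 / ((real (card N) + 1) * r)) * Wb)"
    unfolding R1 R2 using tv_from_coupling[OF R4 R3 rpos _ Wb] r1 by simp
  also have "\<dots> \<le> 3 * (real k powr (-(\<alpha> + \<beta> - 1) / 2) + real k powr (-\<alpha>) + real k powr (-1/2))"
    unfolding Wb_def r_def
    by (rule numeric[OF assms kr _ j0r(1)]) (use card N_def in simp)
  finally show "tv_dist (indep_ind_sum (M1 \<alpha> k p n) p) (indep_ind_sum (M1 \<alpha> k p n) (q_round \<alpha> k p n \<sigma>))
             \<le> 3 * (real k powr (-(\<alpha> + \<beta> - 1) / 2) + real k powr (-\<alpha>) + real k powr (-1/2))"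
    unfolding N_def q_def .
qed


end
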